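(* Let $R$ be a ring of finite characteristic and $J$ a nil ideal of $R$ of bounded index. Then the following are equivalent: (1) $R$ is an $n$-torsion clean ring for some $n\in\mathbb{N}$; (2) $R/J$ is a $t$-torsion clean ring for some $t\in\mathbb{N}$.
   Context: All rings are associative with identity. An ideal $I$ is nil of bounded index if there is $k$ with $r^k=0$ for all $r\in I$. A ring $R$ is $n$-torsion clean if every $r\in R$ can be written $r=e+u$ with $e^2=e$, $u$ a unit, $u^n=1$, and $n$ is the smallest natural number with this property. *)

theory Defs
  imports "HOL-Algebra.Algebra"
begin

definition finite_char :: "('a, 'b) ring_scheme \<Rightarrow> bool" where
  "finite_char R \<longleftrightarrow> (\<exists>m::nat. m > 0 \<and> [m] \<cdot>\<^bsub>R\<^esub> \<one>\<^bsub>R\<^esub> = \<zero>\<^bsub>R\<^esub>)"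

definition nil_bounded_index :: "'a set \<Rightarrow> ('a, 'b) ring_scheme \<Rightarrow> bool" where
  "nil_bounded_index J R \<longleftrightarrow> (\<exists>k::nat. \<forall>r\<in>J. r [^]\<^bsub>R\<^esub> k = \<zero>\<^bsub>R\<^esub>)"

definition torsion_clean_with :: "('a, 'b) ring_scheme \<Rightarrow> nat \<Rightarrow> bool" where
  "torsion_clean_with R n \<longleftrightarrow> n > 0 \<and>
     (\<forall>r\<in>carrier R. \<exists>e u. e \<in> carrier R \<and> e \<otimes>\<^bsub>R\<^esub> e = e \<and> u \<in> Units R \<and>
        u [^]\<^bsub>R\<^esub> n = \<one>\<^bsub>R\<^esub> \<and> r = e \<oplus>\<^bsub>R\<^esub> u)"

definition n_torsion_clean :: "('a, 'b) ring_scheme \<Rightarrow> nat \<Rightarrow> bool" where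
  "n_torsion_clean R n \<longleftrightarrow> torsion_clean_with R n \<and>
     (\<forall>m. 0 < m \<and> m < n \<longrightarrow> \<not> torsion_clean_with R m)"

end

theory Submission
  imports Defs "HOL-Computational_Algebra.Polynomial"
begin



lemma binom_div:
  fixes m K i :: nat assumes "1 \<le> i" "i \<le> K"
  shows "m dvd ((m * fact K) choose i)"
proof -
  obtain q where q: "fact K = i * q" using dvd_fact[OF assms] by (auto elim: dvdE)
  have "i * ((m * fact K) choose i) = (m * fact K) * ((m * fact K - 1) choose (i - 1))"
    using assms by (intro times_binomial_minus1_eq) auto
  also have "\<dots> = i * (m * q * ((m * fact K - 1) choose (i - 1)))" by (simp add: q)
  finally have "(m * fact K) choose i = m * q * ((m * fact K - 1) choose (i - 1))"
    using assms by simp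
  then show ?thesis by simp
qed

lemma torsion_poly:
  fixes x :: "'a::comm_ring_1" and m K :: nat assumes K: "K \<ge> 1"
  shows "\<exists>A B. (1 + x) ^ (m * fact K) = 1 + of_nat m * A + x ^ K * B"
proof (cases "m = 0")
  case True then show ?thesis by (intro exI[of _ 0]) simp
next
  case False
  define N where "N = m * fact K"
  have K1: "K \<le> fact K" by (rule fact_ge_self)
  have K2: "(fact K :: nat) \<le> m * fact K" using False by simp
  have KN: "K \<le> N" unfolding N_def using K1 K2 by linarith
  define f where "f k = of_nat (N choose k) * x ^ k" for k
  have "(1 + x) ^ N = (\<Sum>k\<le>N. f k)"
    using binomial_ring[of x 1 N] by (simp add: f_def add.commute)
  also have "\<dots> = (\<Sum>k\<in>{0..<K}. f k) + (\<Sum>k\<in>{K..<Suc N}. f k)"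
    using KN by (simp add: sum.atLeastLessThan_concat atLeast0AtMost[symmetric] atLeastLessThanSuc_atLeastAtMost[symmetric])
  also have "(\<Sum>k\<in>{0..<K}. f k) = f 0 + (\<Sum>k\<in>{1..<K}. f k)"
    using K by (simp add: sum.atLeast_Suc_lessThan)
  also have "f 0 = 1" by (simp add: f_def)
  also have "(\<Sum>k\<in>{1..<K}. f k) = of_nat m * (\<Sum>k\<in>{1..<K}. of_nat ((N choose k) div m) * x ^ k)"
    unfolding sum_distrib_left
  proof (rule sum.cong)
    fix k assume "k \<in> {1..<K}"
    then have "m dvd N choose k" unfolding N_def by (intro binom_div) auto
    then have "of_nat (N choose k) = (of_nat m * of_nat ((N choose k) div m) :: 'a)"
      by (metis dvd_mult_div_cancel of_nat_mult)
    then show "f k = of_nat m * (of_nat ((N choose k) div m) * x ^ k)"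
      by (simp add: f_def mult.assoc)
  qed simp
  also have "(\<Sum>k\<in>{K..<Suc N}. f k) = x ^ K * (\<Sum>k\<in>{K..<Suc N}. of_nat (N choose k) * x ^ (k - K))"
    unfolding sum_distrib_left
  proof (rule sum.cong)
    fix k assume "k \<in> {K..<Suc N}"
    then have "x ^ k = x ^ K * x ^ (k - K)" by (simp flip: power_add)
    then show "f k = x ^ K * (of_nat (N choose k) * x ^ (k - K))" by (simp add: f_def algebra_simps)
  qed simp
  finally show ?thesis unfolding N_def by blast
qed

lemma idem_poly:
  fixes x :: "'a::comm_ring_1"
  shows "\<exists>f g h. f = x + (x*x - x) * g \<and> f*f - f = (x*x - x) ^ (2^s) * h"
proof (induction s)
  case 0 show ?case by (rule exI[of _ x], rule exI[of _ 0], rule exI[of _ 1]) simp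
next
  case (Suc s)
  define d where "d = x*x - x"
  from Suc obtain f g h where fg: "f = x + d * g" and fh: "f*f - f = d ^ (2^s) * h"
    unfolding d_def by blast
  define y where "y = f*f - f"
  define D where "D = d ^ (2^s - 1)"
  have p: "(2::nat)^s = Suc (2^s - 1)" by simp
  have dD: "d ^ (2^s) = d * D" unfolding D_def by (metis p power_Suc)
  define f' where "f' = 3*f*f - 2*f*f*f"
  have e0: "f' = f - (2*f - 1) * y" unfolding f'_def y_def by (simp add: algebra_simps)
  have xf: "x = f - d * g" using fg by simp
  have "f' = x + d * (g - (2*f - 1) * D * h)"
    unfolding e0 xf using fh dD by (simp add: y_def algebra_simps)
  moreover
  have sq: "(2*f - 1)*(2*f - 1) = 4*y + 1" unfolding y_def by (simp add: algebra_simps)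
  have e1: "f'*f' - f' = (f*f - f) - (2*f-1)*(2*f-1)*y + (2*f-1)*(2*f-1)*y*y"
    unfolding e0 by (simp add: algebra_simps)
  have e2: "f'*f' - f' = y * y * (4*y - 3)"
    unfolding e1 sq y_def[symmetric] by (simp add: algebra_simps)
  have "f'*f' - f' = d ^ (2 ^ Suc s) * (h * h * (4*y - 3))"
    unfolding e2 using fh by (simp add: y_def power_mult power2_eq_square algebra_simps)
  ultimately show ?case unfolding d_def by blast
qed

context ring begin

definition iR :: "int \<Rightarrow> 'a" where "iR c = [c] \<cdot> \<one>"

lemma iR_closed[simp]: "iR c \<in> carrier R" unfolding iR_def by simp
lemma iR_add: "iR (c + d) = iR c \<oplus> iR d" unfolding iR_def by (simp add: add.int_pow_mult)
lemma iR_0[simp]: "iR 0 = \<zero>" unfolding iR_def by (simp add: add_pow_int_ge)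
lemma iR_1[simp]: "iR 1 = \<one>" unfolding iR_def by simp
lemma iR_mult_l: "x \<in> carrier R \<Longrightarrow> iR c \<otimes> x = [c] \<cdot> x"
  unfolding iR_def using add_pow_ldistr_int[of \<one> x c] by simp
lemma iR_mult_r: "x \<in> carrier R \<Longrightarrow> x \<otimes> iR c = [c] \<cdot> x"
  unfolding iR_def using add_pow_rdistr_int[of x \<one> c] by simp
lemma iR_comm: "x \<in> carrier R \<Longrightarrow> iR c \<otimes> x = x \<otimes> iR c"
  by (simp add: iR_mult_l iR_mult_r)
lemma iR_mult: "iR (c * d) = iR c \<otimes> iR d"
  by (simp add: iR_mult_l) (simp add: iR_def add.int_pow_pow mult.commute)
lemma iR_uminus: "iR (- c) = \<ominus> iR c"
  unfolding iR_def by (simp add: add.int_pow_neg)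


definition ev :: "'a \<Rightarrow> int poly \<Rightarrow> 'a" where
  "ev x p = fold_coeffs (\<lambda>c acc. iR c \<oplus> x \<otimes> acc) p \<zero>"

lemma ev_0[simp]: "ev x 0 = \<zero>" unfolding ev_def by simp

lemma ev_closed[simp]: "x \<in> carrier R \<Longrightarrow> ev x p \<in> carrier R"
proof (induction p)
  case 0 then show ?case by simp
next
  case (pCons a p) then show ?case unfolding ev_def by (cases "p = 0") auto
qed

lemma ev_pCons: assumes x: "x \<in> carrier R" shows "ev x (pCons c p) = iR c \<oplus> x \<otimes> ev x p"
proof (cases "p = 0")
  case True
  then show ?thesis using x by (cases "c = 0") (auto simp: ev_def)
next
  case False
  then show ?thesis by (simp add: ev_def)
qed

lemma ev_add: "x \<in> carrier R \<Longrightarrow> ev x (p + q) = ev x p \<oplus> ev x q"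
proof (induction p arbitrary: q)
  case 0 then show ?case by simp
next
  case (pCons a p)
  obtain b q' where q: "q = pCons b q'" by (cases q) auto
  have "ev x (pCons a p + q) = iR (a + b) \<oplus> x \<otimes> (ev x p \<oplus> ev x q')"
    using pCons by (simp add: q ev_pCons)
  also have "\<dots> = (iR a \<oplus> x \<otimes> ev x p) \<oplus> (iR b \<oplus> x \<otimes> ev x q')"
    using pCons by (simp add: iR_add r_distr a_ac)
  finally show ?case using pCons by (simp add: q ev_pCons)
qed

lemma ev_smult: "x \<in> carrier R \<Longrightarrow> ev x (smult c q) = iR c \<otimes> ev x q"
proof (induction q)
  case 0 then show ?case by simp
next
  case (pCons a p)
  have "ev x (smult c (pCons a p)) = iR (c * a) \<oplus> x \<otimes> (iR c \<otimes> ev x p)"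
    using pCons by (simp add: ev_pCons)
  also have "\<dots> = iR c \<otimes> (iR a \<oplus> x \<otimes> ev x p)"
  proof -
    have "x \<otimes> (iR c \<otimes> ev x p) = iR c \<otimes> (x \<otimes> ev x p)"
      using pCons by (simp add: m_assoc[symmetric] iR_comm[of x c])
    then show ?thesis using pCons by (simp add: iR_mult r_distr)
  qed
  finally show ?case using pCons by (simp add: ev_pCons)
qed

lemma ev_mult: "x \<in> carrier R \<Longrightarrow> ev x (p * q) = ev x p \<otimes> ev x q"
proof (induction p)
  case 0 then show ?case by simp
next
  case (pCons a p)
  have "ev x (pCons a p * q) = ev x (smult a q + pCons 0 (p * q))" by simp
  also have "\<dots> = iR a \<otimes> ev x q \<oplus> x \<otimes> (ev x p \<otimes> ev x q)"
    using pCons by (simp add: ev_add ev_smult ev_pCons)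
  also have "\<dots> = (iR a \<oplus> x \<otimes> ev x p) \<otimes> ev x q"
    using pCons by (simp add: l_distr m_assoc)
  finally show ?case using pCons by (simp add: ev_pCons)
qed

lemma ev_const: "x \<in> carrier R \<Longrightarrow> ev x [:c:] = iR c"
  by (simp add: ev_pCons)
lemma ev_one[simp]: "x \<in> carrier R \<Longrightarrow> ev x 1 = \<one>"
  by (simp add: one_pCons ev_pCons)
lemma ev_X[simp]: "x \<in> carrier R \<Longrightarrow> ev x [:0,1:] = x"
  by (simp add: ev_pCons)
lemma ev_of_int: "x \<in> carrier R \<Longrightarrow> ev x (of_int c) = iR c"
  by (simp add: of_int_poly ev_const)
lemma ev_uminus: assumes x: "x \<in> carrier R" shows "ev x (- p) = \<ominus> ev x p"
proof -
  have "ev x (- p) \<oplus> ev x p = \<zero>" using x by (simp add: ev_add[symmetric])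
  from minus_equality[OF this] x show ?thesis by simp
qed
lemma ev_diff: assumes x: "x \<in> carrier R" shows "ev x (p - q) = ev x p \<ominus> ev x q"
  by (simp only: diff_conv_add_uminus ev_add[OF x] ev_uminus[OF x] minus_eq)
lemma ev_power: assumes x: "x \<in> carrier R" shows "ev x (p ^ n) = ev x p [^] n"
proof (induction n)
  case 0 then show ?case using x by simp
next
  case (Suc n) then show ?case using x by (simp only: power_Suc2 ev_mult[OF x] nat_pow_Suc)
qed
lemma ev_comm: assumes x: "x \<in> carrier R" shows "ev x p \<otimes> ev x q = ev x q \<otimes> ev x p"
  by (metis ev_mult[OF x] mult.commute)


lemma minus_zero_eq: "x \<in> carrier R \<Longrightarrow> y \<in> carrier R \<Longrightarrow> x \<ominus> y = \<zero> \<Longrightarrow> x = y"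
proof -
  assume xy: "x \<in> carrier R" "y \<in> carrier R" "x \<ominus> y = \<zero>"
  have 1: "x \<oplus> \<ominus> y \<oplus> y = x" using xy by (simp add: a_assoc l_neg)
  have 2: "x \<oplus> \<ominus> y \<oplus> y = y" using xy by (simp add: minus_eq)
  from 1 2 show "x = y" by simp
qed

lemma nil_pow:
  fixes k n :: nat
  assumes J: "ideal J R" and nil: "\<forall>r\<in>J. r [^] k = \<zero>" and y: "y \<in> J" and kn: "k \<le> n"
  shows "y [^] n = \<zero>"
proof -
  have yc: "y \<in> carrier R" using J y by (meson ideal.Icarr)
  have "y [^] n = y [^] k \<otimes> y [^] (n - k)" using yc kn by (simp add: nat_pow_mult)
  then show ?thesis using nil y yc by simp
qed

lemma lr_inv_unit:
  assumes "u \<in> carrier R" "l \<in> carrier R" "r \<in> carrier R" "l \<otimes> u = \<one>" "u \<otimes> r = \<one>"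
  shows "u \<in> Units R"
proof -
  have "l \<otimes> (u \<otimes> r) = (l \<otimes> u) \<otimes> r" using assms(1-3) by (simp add: m_assoc)
  then have "l = r" using assms by simp
  then show ?thesis using assms unfolding Units_def by auto
qed

lemma one_plus_nil_unit:
  fixes k :: nat
  assumes J: "ideal J R" and nil: "\<forall>r\<in>J. r [^] k = \<zero>" and j: "j \<in> J"
  shows "\<one> \<oplus> j \<in> Units R"
proof -
  have jc: "j \<in> carrier R" using J j by (meson ideal.Icarr)
  define Xp :: "int poly" where "Xp = [:0,1:]"
  have eX: "ev j Xp = j" unfolding Xp_def using jc by simp
  define P where "P = (\<Sum>i<k. (- Xp) ^ i)"
  have id: "(1 + Xp) * P = 1 - (- Xp) ^ k"
    unfolding P_def using one_diff_power_eq[of "- Xp" k] by simp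
  have nj: "\<ominus> j \<in> J" using J j by (simp add: ideal.axioms additive_subgroup.a_inv_closed)
  have "ev j ((1 + Xp) * P) = \<one>"
    unfolding id using jc nil nj by (simp add: ev_diff ev_power ev_uminus eX minus_eq)
  then have 1: "(\<one> \<oplus> j) \<otimes> ev j P = \<one>" using jc by (simp add: ev_mult ev_add eX)
  then have 2: "ev j P \<otimes> (\<one> \<oplus> j) = \<one>"
    using jc ev_comm[OF jc, of P "1 + Xp"] by (simp add: ev_add eX)
  show ?thesis using 1 2 jc by (intro lr_inv_unit[of _ "ev j P" "ev j P"]) auto
qed

lemma torsion_lift:
  fixes k m :: nat
  assumes J: "ideal J R" and nil: "\<forall>r\<in>J. r [^] k = \<zero>" and j: "j \<in> J"
    and m: "[m] \<cdot> \<one> = \<zero>"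
  shows "(\<one> \<oplus> j) [^] (m * fact (Suc k)) = \<one>"
proof -
  have jc: "j \<in> carrier R" using J j by (meson ideal.Icarr)
  define Xp :: "int poly" where "Xp = [:0,1:]"
  have eX: "ev j Xp = j" unfolding Xp_def using jc by simp
  obtain A B where AB: "(1 + Xp) ^ (m * fact (Suc k)) = 1 + of_nat m * A + Xp ^ Suc k * B"
    using torsion_poly[of "Suc k" Xp m] by auto
  have im: "iR (int m) = \<zero>" unfolding iR_def using m by (simp add: add_pow_int_ge)
  have jk: "j [^] Suc k = \<zero>" using nil_pow[OF J nil j, of "Suc k"] by simp
  have "ev j (of_nat m * A) = \<zero>"
  proof -
    have "ev j (of_nat m) = iR (int m)" using ev_of_int[OF jc, of "int m"] by simp
    then show ?thesis using jc im by (simp add: ev_mult)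
  qed
  moreover have "ev j (Xp ^ Suc k * B) = \<zero>"
    by (simp only: ev_mult[OF jc] ev_power[OF jc] eX jk) (simp add: jc)
  ultimately have "ev j ((1 + Xp) ^ (m * fact (Suc k))) = \<one>"
    unfolding AB using jc by (simp add: ev_add)
  then show ?thesis using jc by (simp add: ev_power ev_add eX)
qed

lemma idem_lift:
  fixes k :: nat
  assumes J: "ideal J R" and nil: "\<forall>r\<in>J. r [^] k = \<zero>" and a: "a \<in> carrier R"
    and aJ: "a \<otimes> a \<ominus> a \<in> J"
  shows "\<exists>e\<in>carrier R. e \<otimes> e = e \<and> e \<ominus> a \<in> J"
proof -
  define Xp :: "int poly" where "Xp = [:0,1:]"
  have eX: "ev a Xp = a" unfolding Xp_def using a by simp
  obtain f g h where fg: "f = Xp + (Xp*Xp - Xp) * g" and fh: "f*f - f = (Xp*Xp - Xp) ^ (2^k) * h"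
    using idem_poly[of Xp k] by blast
  have ed: "ev a (Xp*Xp - Xp) = a \<otimes> a \<ominus> a" by (simp only: ev_diff[OF a] ev_mult[OF a] eX)
  have kk: "k \<le> 2^k" using less_exp[of k] by linarith
  have z: "(a \<otimes> a \<ominus> a) [^] ((2::nat)^k) = \<zero>" by (rule nil_pow[OF J nil aJ kk])
  have "ev a (f*f - f) = \<zero>"
    unfolding fh by (simp only: ev_mult[OF a] ev_power[OF a] ed z) (simp add: a)
  then have "ev a f \<otimes> ev a f \<ominus> ev a f = \<zero>" by (simp only: ev_diff[OF a] ev_mult[OF a])
  then have e1: "ev a f \<otimes> ev a f = ev a f" by (rule minus_zero_eq[OF m_closed[OF ev_closed[OF a] ev_closed[OF a]] ev_closed[OF a]])
  have fX: "f - Xp = (Xp*Xp - Xp) * g" unfolding fg by (rule add_diff_cancel_left')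
  have "ev a f \<ominus> a = (a \<otimes> a \<ominus> a) \<otimes> ev a g"
    using arg_cong[OF fX, of "ev a"] by (simp only: ev_mult[OF a] ed ev_diff[OF a] eX)
  moreover have "(a \<otimes> a \<ominus> a) \<otimes> ev a g \<in> J" using a aJ J by (simp add: ideal.I_r_closed)
  ultimately have "ev a f \<ominus> a \<in> J" by simp
  then show ?thesis using e1 ev_closed[OF a, of f] by blast
qed


lemma plus_minus_cancel: "x \<in> carrier R \<Longrightarrow> y \<in> carrier R \<Longrightarrow> y \<oplus> (x \<ominus> y) = x"
  by (simp add: minus_eq a_lcomm r_neg)

lemma quot_facts:
  assumes J: "ideal J R"
  shows "ring (R Quot J)" "(\<lambda>x. J +> x) \<in> ring_hom R (R Quot J)"
    "carrier (R Quot J) = (\<lambda>x. J +> x) ` carrier R"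
    "\<And>x y. x \<in> carrier R \<Longrightarrow> y \<in> carrier R \<Longrightarrow> (J +> x = J +> y) \<longleftrightarrow> x \<ominus> y \<in> J"
proof -
  interpret I: ideal J R by fact
  show "ring (R Quot J)" by (rule I.quotient_is_ring)
  show "(\<lambda>x. J +> x) \<in> ring_hom R (R Quot J)" using I.rcos_ring_hom by simp
  show "carrier (R Quot J) = (\<lambda>x. J +> x) ` carrier R"
    by (auto simp add: FactRing_def A_RCOSETS_def')
  fix x y assume x: "x \<in> carrier R" and y: "y \<in> carrier R"
  show "(J +> x = J +> y) \<longleftrightarrow> x \<ominus> y \<in> J"
  proof
    assume "J +> x = J +> y"
    then have "x \<in> J +> y" using I.a_rcos_self[OF x] by simp
    then show "x \<ominus> y \<in> J" using I.a_rcos_module_minus[OF ring_axioms y x] by simp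
  next
    assume "x \<ominus> y \<in> J"
    then have "x \<in> J +> y" using I.a_rcos_module_minus[OF ring_axioms y x] by simp
    then show "J +> x = J +> y" using I.a_repr_independence'[OF _ y] by simp
  qed
qed


lemma tcw_down:
  assumes J: "ideal J R" and T: "torsion_clean_with R n"
  shows "torsion_clean_with (R Quot J) n"
proof -
  note QF = quot_facts[OF J]
  interpret Q: ring "R Quot J" by (rule QF(1))
  interpret H: ring_hom_ring R "R Quot J" "a_r_coset R J"
    using QF(1,2) ring_axioms by (intro ring_hom_ringI2) auto
  show ?thesis unfolding torsion_clean_with_def
  proof (intro conjI ballI)
    show "n > 0" using T by (simp add: torsion_clean_with_def)
    fix Y assume "Y \<in> carrier (R Quot J)"
    then obtain r where r: "r \<in> carrier R" "Y = J +> r" using QF(3) by auto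
    obtain e u where eu: "e \<in> carrier R" "e \<otimes> e = e" "u \<in> Units R" "u [^] n = \<one>" "r = e \<oplus> u"
      using T r(1) unfolding torsion_clean_with_def by blast
    have uc: "u \<in> carrier R" using eu(3) by auto
    obtain v where v: "v \<in> carrier R" "v \<otimes> u = \<one>" "u \<otimes> v = \<one>" using eu(3) unfolding Units_def by auto
    have vu: "(J +> v) \<otimes>\<^bsub>R Quot J\<^esub> (J +> u) = \<one>\<^bsub>R Quot J\<^esub>"
      using H.hom_mult[OF v(1) uc] v by simp
    have uv: "(J +> u) \<otimes>\<^bsub>R Quot J\<^esub> (J +> v) = \<one>\<^bsub>R Quot J\<^esub>"
      using H.hom_mult[OF uc v(1)] v by simp
    have "J +> u \<in> Units (R Quot J)"
      unfolding Units_def using vu uv v uc H.hom_closed by blast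
    moreover have "(J +> e) \<otimes>\<^bsub>R Quot J\<^esub> (J +> e) = J +> e" using eu by (simp add: H.hom_mult[symmetric])
    moreover have "(J +> u) [^]\<^bsub>R Quot J\<^esub> n = \<one>\<^bsub>R Quot J\<^esub>" using eu uc by (simp add: H.hom_nat_pow[symmetric])
    moreover have "Y = (J +> e) \<oplus>\<^bsub>R Quot J\<^esub> (J +> u)" using eu uc r by simp
    moreover have "J +> e \<in> carrier (R Quot J)" using eu by simp
    ultimately show "\<exists>e u. e \<in> carrier (R Quot J) \<and> e \<otimes>\<^bsub>R Quot J\<^esub> e = e \<and> u \<in> Units (R Quot J) \<and>
        u [^]\<^bsub>R Quot J\<^esub> n = \<one>\<^bsub>R Quot J\<^esub> \<and> Y = e \<oplus>\<^bsub>R Quot J\<^esub> u" by blast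
  qed
qed


lemma unit_lift:
  fixes k :: nat
  assumes J: "ideal J R" and nil: "\<forall>r\<in>J. r [^] k = \<zero>" and uc: "u \<in> carrier R"
    and U: "J +> u \<in> Units (R Quot J)"
  shows "u \<in> Units R"
proof -
  note QF = quot_facts[OF J]
  interpret Q: ring "R Quot J" by (rule QF(1))
  interpret H: ring_hom_ring R "R Quot J" "a_r_coset R J"
    using QF(1,2) ring_axioms by (intro ring_hom_ringI2) auto
  obtain V where V: "V \<in> carrier (R Quot J)" "V \<otimes>\<^bsub>R Quot J\<^esub> (J +> u) = \<one>\<^bsub>R Quot J\<^esub>"
      "(J +> u) \<otimes>\<^bsub>R Quot J\<^esub> V = \<one>\<^bsub>R Quot J\<^esub>"
    using U unfolding Units_def by blast
  obtain v where v: "v \<in> carrier R" "V = J +> v" using V(1) QF(3) by auto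
  have "J +> (v \<otimes> u) = J +> \<one>" using V v uc by simp
  then have j1: "v \<otimes> u \<ominus> \<one> \<in> J" by (simp only: QF(4)[OF m_closed[OF v(1) uc] one_closed])
  have "J +> (u \<otimes> v) = J +> \<one>" using V v uc by simp
  then have j2: "u \<otimes> v \<ominus> \<one> \<in> J" by (simp only: QF(4)[OF m_closed[OF uc v(1)] one_closed])
  define w1 where "w1 = \<one> \<oplus> (v \<otimes> u \<ominus> \<one>)"
  define w2 where "w2 = \<one> \<oplus> (u \<otimes> v \<ominus> \<one>)"
  have w1: "w1 = v \<otimes> u" unfolding w1_def using v uc by (simp add: plus_minus_cancel)
  have w2: "w2 = u \<otimes> v" unfolding w2_def using v uc by (simp add: plus_minus_cancel)
  have w1U: "w1 \<in> Units R" unfolding w1_def by (rule one_plus_nil_unit[OF J nil j1])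
  have w2U: "w2 \<in> Units R" unfolding w2_def by (rule one_plus_nil_unit[OF J nil j2])
  have l: "(inv w1 \<otimes> v) \<otimes> u = \<one>"
  proof -
    have "(inv w1 \<otimes> v) \<otimes> u = inv w1 \<otimes> (v \<otimes> u)" using v uc w1U by (simp add: m_assoc)
    also have "\<dots> = inv w1 \<otimes> w1" by (simp only: w1)
    also have "\<dots> = \<one>" using w1U by simp
    finally show ?thesis .
  qed
  have r: "u \<otimes> (v \<otimes> inv w2) = \<one>"
  proof -
    have "u \<otimes> (v \<otimes> inv w2) = (u \<otimes> v) \<otimes> inv w2" using v uc w2U by (simp add: m_assoc)
    also have "\<dots> = w2 \<otimes> inv w2" by (simp only: w2)
    also have "\<dots> = \<one>" using w2U by simp
    finally show ?thesis .
  qed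
  show ?thesis
    by (rule lr_inv_unit[OF uc _ _ l r]) (use w1U w2U v in auto)
qed

lemma tcw_up:
  fixes k m :: nat
  assumes J: "ideal J R" and nil: "\<forall>r\<in>J. r [^] k = \<zero>" and m: "m > 0" "[m] \<cdot> \<one> = \<zero>"
    and T: "torsion_clean_with (R Quot J) t"
  shows "torsion_clean_with R (t * (m * fact (Suc k)))"
proof -
  note QF = quot_facts[OF J]
  interpret Q: ring "R Quot J" by (rule QF(1))
  interpret H: ring_hom_ring R "R Quot J" "a_r_coset R J"
    using QF(1,2) ring_axioms by (intro ring_hom_ringI2) auto
  have t: "t > 0" using T by (simp add: torsion_clean_with_def)
  show ?thesis unfolding torsion_clean_with_def
  proof (intro conjI ballI)
    show "t * (m * fact (Suc k)) > 0" using t m by simp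
    fix r assume r: "r \<in> carrier R"
    then have "J +> r \<in> carrier (R Quot J)" by simp
    then obtain E U where EU: "E \<in> carrier (R Quot J)" "E \<otimes>\<^bsub>R Quot J\<^esub> E = E" "U \<in> Units (R Quot J)"
       "U [^]\<^bsub>R Quot J\<^esub> t = \<one>\<^bsub>R Quot J\<^esub>" "J +> r = E \<oplus>\<^bsub>R Quot J\<^esub> U"
      using T unfolding torsion_clean_with_def by blast
    obtain a where a: "a \<in> carrier R" "E = J +> a" using EU(1) QF(3) by auto
    have "J +> (a \<otimes> a) = J +> a" using EU(2) a by simp
    then have aJ: "a \<otimes> a \<ominus> a \<in> J" by (simp only: QF(4)[OF m_closed[OF a(1) a(1)] a(1)])
    obtain e where e: "e \<in> carrier R" "e \<otimes> e = e" "e \<ominus> a \<in> J"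
      using idem_lift[OF J nil a(1) aJ] by blast
    have he: "J +> e = E" using QF(4)[OF e(1) a(1)] e a by simp
    define u where "u = r \<ominus> e"
    have uc: "u \<in> carrier R" unfolding u_def using r e by simp
    have reu: "r = e \<oplus> u" unfolding u_def using r e by (simp add: plus_minus_cancel)
    have Uc: "U \<in> carrier (R Quot J)" using EU(3) by auto
    have EE: "E \<oplus>\<^bsub>R Quot J\<^esub> (J +> u) = E \<oplus>\<^bsub>R Quot J\<^esub> U"
      using EU(5) reu he e uc by simp
    have hu: "J +> u = U" using Q.add.l_cancel[OF EE] EU(1) Uc uc by simp
    have uU: "u \<in> Units R" using unit_lift[OF J nil uc] EU(3) hu by simp
    have "J +> (u [^] t) = J +> \<one>" using hu EU(4) uc by (simp add: H.hom_nat_pow)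
    then have "u [^] t \<ominus> \<one> \<in> J" by (simp only: QF(4)[OF nat_pow_closed[OF uc] one_closed])
    then have "(\<one> \<oplus> (u [^] t \<ominus> \<one>)) [^] (m * fact (Suc k)) = \<one>"
      by (rule torsion_lift[OF J nil _ m(2)])
    then have "(u [^] t) [^] (m * fact (Suc k)) = \<one>" using uc by (simp add: plus_minus_cancel)
    then have ut: "u [^] (t * (m * fact (Suc k))) = \<one>" using uc by (simp add: nat_pow_pow)
    show "\<exists>e u. e \<in> carrier R \<and> e \<otimes> e = e \<and> u \<in> Units R \<and>
        u [^] (t * (m * fact (Suc k))) = \<one> \<and> r = e \<oplus> u"
      using e uU ut reu by blast
  qed
qed

end

lemma tcw_least:
  assumes "\<exists>n. torsion_clean_with R n"
  shows "\<exists>n. n_torsion_clean R n"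
proof -
  define n0 where "n0 = (LEAST n. torsion_clean_with R n)"
  have "torsion_clean_with R n0" unfolding n0_def using assms by (rule LeastI_ex)
  moreover have "\<forall>m. 0 < m \<and> m < n0 \<longrightarrow> \<not> torsion_clean_with R m"
    unfolding n0_def using not_less_Least by blast
  ultimately show ?thesis unfolding n_torsion_clean_def by blast
qed

theorem corollary2p12:
  fixes R :: "('a, 'b) ring_scheme" and J :: "'a set"
  assumes "ring R" and "ideal J R" and "finite_char R" and "nil_bounded_index J R"
  shows "(\<exists>n. n_torsion_clean R n) \<longleftrightarrow> (\<exists>t. n_torsion_clean (R Quot J) t)"
proof -
  interpret ring R by fact
  obtain k :: nat where nil: "\<forall>r\<in>J. r [^]\<^bsub>R\<^esub> k = \<zero>\<^bsub>R\<^esub>"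
    using assms(4) unfolding nil_bounded_index_def by blast
  obtain m :: nat where m: "m > 0" "[m] \<cdot>\<^bsub>R\<^esub> \<one>\<^bsub>R\<^esub> = \<zero>\<^bsub>R\<^esub>"
    using assms(3) unfolding finite_char_def by blast
  show ?thesis
  proof
    assume "\<exists>n. n_torsion_clean R n"
    then obtain n where "torsion_clean_with R n" unfolding n_torsion_clean_def by blast
    then have "torsion_clean_with (R Quot J) n" by (rule tcw_down[OF assms(2)])
    then show "\<exists>t. n_torsion_clean (R Quot J) t" by (intro tcw_least) blast
  next
    assume "\<exists>t. n_torsion_clean (R Quot J) t"
    then obtain t where "torsion_clean_with (R Quot J) t" unfolding n_torsion_clean_def by blast
    then have "torsion_clean_with R (t * (m * fact (Suc k)))"
      by (rule tcw_up[OF assms(2) nil m])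
    then show "\<exists>n. n_torsion_clean R n" by (intro tcw_least) blast
  qed
qed

end
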